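(* Let $|\psi\rangle\in(\mathbb{C}^d)^{\otimes n}$ be a normalized state such that every element of the stabilizer of $|\psi\rangle^{\otimes 2}$ is unitary. Let $g_1,g_2$ be local invertible operators, $g_k=\bigotimes_{i=1}^n g_k^{(i)}$ with $g_k^{(i)}\in\mathrm{GL}(d,\mathbb{C})$. Then $$p^{\mathrm{SEP}}_{\max}\!\left(g_1|\psi\rangle\otimes g_2|\psi\rangle\mapsto|\psi\rangle^{\otimes 2}\right)=p^{\mathrm{SEP}}_{\max}\!\left(g_1|\psi\rangle\mapsto|\psi\rangle\right)\,p^{\mathrm{SEP}}_{\max}\!\left(g_2|\psi\rangle\mapsto|\psi\rangle\right),$$ where initial states are normalized.
   Context: The two-copy states are regarded as $n$-partite states in which party $i$ holds subsystem $i$ of both copies (local dimension $d^2$). The stabilizer of $|\psi\rangle^{\otimes 2}$ is the set of $S=\bigotimes_i S^{(i)}$ with $S^{(i)}\in\mathrm{GL}(d^2,\mathbb{C})$ and $S|\psi\rangle^{\otimes 2}=|\psi\rangle^{\otimes 2}$. $p^{\mathrm{SEP}}_{\max}(|a\rangle\mapsto|b\rangle)$ denotes the maximal success probability of transforming $|a\rangle$ into $|b\rangle$ by separable operations with respect to the relevant party partition. A separable operation is one whose Kraus operators have product form over the parties, with $\sum_k M_k^\dagger M_k\le\mathbb{1}$. Its success probability is $\sum_k\|M_k|a\rangle\|^2$, summed over the branches with $M_k|a\rangle\propto|b\rangle$. *)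

theory Defs
  imports Complex_Main
begin

text \<open>n-partite pure states with local dimension D: complex amplitudes indexed by
  lists xs of length n with entries < D (computational basis).  Values outside
  this index set are irrelevant (all sums and comparisons range over idx n D).\<close>

definition idx :: "nat \<Rightarrow> nat \<Rightarrow> nat list set" where
  "idx n D = {xs. length xs = n \<and> (\<forall>x\<in>set xs. x < D)}"

type_synonym state = "nat list \<Rightarrow> complex"
type_synonym lop = "nat \<Rightarrow> nat \<Rightarrow> complex"  \<comment> \<open>local D x D matrix\<close>

definition vnorm2 :: "nat \<Rightarrow> nat \<Rightarrow> state \<Rightarrow> real" where
  "vnorm2 n D v = (\<Sum>xs\<in>idx n D. (cmod (v xs))^2)"

definition normalize_state :: "nat \<Rightarrow> nat \<Rightarrow> state \<Rightarrow> state" where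
  "normalize_state n D v = (\<lambda>xs. v xs / complex_of_real (sqrt (vnorm2 n D v)))"

definition prod_entry :: "lop list \<Rightarrow> nat list \<Rightarrow> nat list \<Rightarrow> complex" where
  "prod_entry ms xs ys = (\<Prod>i<length ms. (ms!i) (xs!i) (ys!i))"

definition prod_apply :: "nat \<Rightarrow> nat \<Rightarrow> lop list \<Rightarrow> state \<Rightarrow> state" where
  "prod_apply n D ms v = (\<lambda>xs. \<Sum>ys\<in>idx n D. prod_entry ms xs ys * v ys)"

definition invertible_lop :: "nat \<Rightarrow> lop \<Rightarrow> bool" where
  "invertible_lop D M = (\<exists>N. \<forall>i<D. \<forall>j<D.
      (\<Sum>k<D. M i k * N k j) = (if i = j then 1 else 0) \<and>
      (\<Sum>k<D. N i k * M k j) = (if i = j then 1 else 0))"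

definition unitary_prod :: "nat \<Rightarrow> nat \<Rightarrow> lop list \<Rightarrow> bool" where
  "unitary_prod n D ms = (\<forall>xs\<in>idx n D. \<forall>ys\<in>idx n D.
      (\<Sum>zs\<in>idx n D. cnj (prod_entry ms zs xs) * prod_entry ms zs ys) = (if xs = ys then 1 else 0))"

text \<open>Two-copy state a \<otimes> b regarded as n-partite state with local dimension d^2:
  party i holds the pair (x_i, y_i), encoded as x_i * d + y_i.\<close>
definition tensor2 :: "nat \<Rightarrow> state \<Rightarrow> state \<Rightarrow> state" where
  "tensor2 d a b = (\<lambda>zs. a (map (\<lambda>z. z div d) zs) * b (map (\<lambda>z. z mod d) zs))"

text \<open>Separable operation: finite family of product Kraus operators with
  \<Sum>_k M_k^dagger M_k \<le> 1, i.e. \<Sum>_k ||M_k v||^2 \<le> ||v||^2 for all v.\<close>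
definition sep_op :: "nat \<Rightarrow> nat \<Rightarrow> lop list list \<Rightarrow> bool" where
  "sep_op n D Ks = ((\<forall>ms\<in>set Ks. length ms = n) \<and>
      (\<forall>v. (\<Sum>ms\<leftarrow>Ks. vnorm2 n D (prod_apply n D ms v)) \<le> vnorm2 n D v))"

definition succ_prob :: "nat \<Rightarrow> nat \<Rightarrow> lop list list \<Rightarrow> state \<Rightarrow> state \<Rightarrow> real" where
  "succ_prob n D Ks a b = (\<Sum>ms\<leftarrow>Ks.
      if (\<exists>c. \<forall>xs\<in>idx n D. prod_apply n D ms a xs = c * b xs)
      then vnorm2 n D (prod_apply n D ms a) else 0)"

definition pmax_sep :: "nat \<Rightarrow> nat \<Rightarrow> state \<Rightarrow> state \<Rightarrow> real" where
  "pmax_sep n D a b = Sup {succ_prob n D Ks a b | Ks. sep_op n D Ks}"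

end

theory Submission
  imports Defs "Jordan_Normal_Form.Determinant"
begin


lemma noninv_left_null:
  assumes "\<not> invertible_lop D A"
  shows "\<exists>w a0. a0 < D \<and> w a0 \<noteq> 0 \<and> (\<forall>l<D. (\<Sum>k<D. w k * A k l) = 0)"
proof -
  define M where "M = mat D D (\<lambda>(i,j). A j i)"
  have M: "M \<in> carrier_mat D D" by (simp add: M_def)
  show ?thesis
  proof (cases "det M = 0")
    case True
    then obtain v where v: "v \<in> carrier_vec D" "v \<noteq> 0\<^sub>v D" "M *\<^sub>v v = 0\<^sub>v D"
      using det_0_iff_vec_prod_zero[OF M] by blast
    obtain a0 where a0: "a0 < D" "v $ a0 \<noteq> 0"
      using v(1,2) by (metis eq_vecI index_zero_vec(1,2) carrier_vecD)
    have "(\<Sum>k<D. v $ k * A k l) = 0" if "l < D" for l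
    proof -
      have "(M *\<^sub>v v) $ l = 0" using v(3) that by simp
      thus ?thesis using that v(1) unfolding M_def
        by (simp add: mult_mat_vec_def scalar_prod_def row_def mult.commute atLeast0LessThan)
    qed
    thus ?thesis using a0 by blast
  next
    case False
    from det_non_zero_imp_unit[OF M False, of "()"]
    obtain B where B: "B \<in> carrier_mat D D" "B * M = 1\<^sub>m D" "M * B = 1\<^sub>m D"
      unfolding Units_def ring_mat_def by auto
    have "invertible_lop D A"
      unfolding invertible_lop_def
    proof (rule exI[of _ "\<lambda>k j. B $$ (j,k)"], intro allI impI conjI)
      fix i j assume ij: "i < D" "j < D"
      have "(B * M) $$ (j,i) = (if i = j then 1 else 0)" using B(2) ij by auto
      thus "(\<Sum>k<D. A i k * B $$ (j, k)) = (if i = j then 1 else 0)"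
        using B(1) ij unfolding M_def
        by (simp add: times_mat_def scalar_prod_def row_def col_def mult.commute atLeast0LessThan)
      have "(M * B) $$ (j,i) = (if i = j then 1 else 0)" using B(3) ij by auto
      thus "(\<Sum>k<D. B $$ (k, i) * A k j) = (if i = j then 1 else 0)"
        using B(1) ij unfolding M_def
        by (simp add: times_mat_def scalar_prod_def row_def col_def mult.commute atLeast0LessThan)
    qed
    with assms show ?thesis by blast
  qed
qed



lemma idx_Suc: "idx (Suc n) D = (\<lambda>(x,xs). x#xs) ` ({..<D} \<times> idx n D)"
proof (rule Set.set_eqI)
  fix ys show "ys \<in> idx (Suc n) D \<longleftrightarrow> ys \<in> (\<lambda>(x,xs). x#xs) ` ({..<D} \<times> idx n D)"
    by (cases ys) (auto simp: idx_def)
qed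

lemma idx_0: "idx 0 D = {[]}" by (auto simp: idx_def)

lemma finite_idx[simp]: "finite (idx n D)"
  by (induction n) (auto simp: idx_Suc idx_0)

lemma idx_len: "xs \<in> idx n D \<Longrightarrow> length xs = n" by (simp add: idx_def)
lemma idx_nth: "xs \<in> idx n D \<Longrightarrow> i < n \<Longrightarrow> xs!i < D" by (simp add: idx_def)
lemma idx_iff: "xs \<in> idx n D \<longleftrightarrow> length xs = n \<and> (\<forall>i<n. xs!i < D)"
  by (auto simp: idx_def in_set_conv_nth) (metis nth_mem)

lemma sum_prod_idx:
  "(\<Sum>xs\<in>idx n D. \<Prod>i<n. f i (xs!i)) = (\<Prod>i<n. \<Sum>y<D. (f i y :: 'a::comm_semiring_1))"
proof (induction n arbitrary: f)
  case 0 thus ?case by (simp add: idx_0)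
next
  case (Suc n)
  have inj: "inj_on (\<lambda>(x,xs). x#xs) ({..<D} \<times> idx n D)" by (auto simp: inj_on_def)
  have "(\<Sum>xs\<in>idx (Suc n) D. \<Prod>i<Suc n. f i (xs!i))
      = (\<Sum>(x,xs)\<in>{..<D} \<times> idx n D. \<Prod>i<Suc n. f i ((x#xs)!i))"
    unfolding idx_Suc by (subst sum.reindex[OF inj]) (simp add: case_prod_unfold)
  also have "\<dots> = (\<Sum>(x,xs)\<in>{..<D} \<times> idx n D. f 0 x * (\<Prod>i<n. f (Suc i) (xs!i)))"
    by (simp add: prod.lessThan_Suc_shift del: prod.lessThan_Suc)
  also have "\<dots> = (\<Sum>x<D. f 0 x * (\<Sum>xs\<in>idx n D. \<Prod>i<n. f (Suc i) (xs!i)))"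
    by (simp add: sum.cartesian_product[symmetric] sum_distrib_left)
  also have "\<dots> = (\<Sum>x<D. f 0 x) * (\<Prod>i<n. \<Sum>y<D. f (Suc i) y)"
    using Suc.IH[of "\<lambda>i. f (Suc i)"] by (simp add: sum_distrib_right)
  also have "\<dots> = (\<Prod>i<Suc n. \<Sum>y<D. f i y)" by (simp only: prod.lessThan_Suc_shift)
  finally show ?case .
qed

definition lcomp :: "nat \<Rightarrow> lop \<Rightarrow> lop \<Rightarrow> lop" where
  "lcomp D A B = (\<lambda>i j. \<Sum>k<D. A i k * B k j)"

definition pcomp :: "nat \<Rightarrow> lop list \<Rightarrow> lop list \<Rightarrow> lop list" where
  "pcomp D ms ns = map2 (lcomp D) ms ns"

lemma length_pcomp[simp]: "length (pcomp D ms ns) = min (length ms) (length ns)"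
  by (simp add: pcomp_def)

lemma pcomp_nth: "i < length ms \<Longrightarrow> i < length ns \<Longrightarrow> pcomp D ms ns ! i = lcomp D (ms!i) (ns!i)"
  by (simp add: pcomp_def)

lemma prod_entry_comp:
  assumes "length ms = n" "length ns = n" "xs \<in> idx n D" "zs \<in> idx n D"
  shows "(\<Sum>ys\<in>idx n D. prod_entry ms xs ys * prod_entry ns ys zs) = prod_entry (pcomp D ms ns) xs zs"
proof -
  have "(\<Sum>ys\<in>idx n D. prod_entry ms xs ys * prod_entry ns ys zs)
     = (\<Sum>ys\<in>idx n D. \<Prod>i<n. (ms!i) (xs!i) (ys!i) * (ns!i) (ys!i) (zs!i))"
    using assms by (simp add: prod_entry_def prod.distrib)
  also have "\<dots> = (\<Prod>i<n. \<Sum>y<D. (ms!i) (xs!i) y * (ns!i) y (zs!i))"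
    by (rule sum_prod_idx)
  also have "\<dots> = prod_entry (pcomp D ms ns) xs zs"
    using assms by (simp add: prod_entry_def pcomp_nth lcomp_def)
  finally show ?thesis .
qed

lemma prod_apply_comp:
  assumes "length ms = n" "length ns = n" "xs \<in> idx n D"
  shows "prod_apply n D ms (prod_apply n D ns v) xs = prod_apply n D (pcomp D ms ns) v xs"
proof -
  have "prod_apply n D ms (prod_apply n D ns v) xs
     = (\<Sum>ys\<in>idx n D. \<Sum>zs\<in>idx n D. prod_entry ms xs ys * prod_entry ns ys zs * v zs)"
    by (simp add: prod_apply_def sum_distrib_left mult.assoc)
  also have "\<dots> = (\<Sum>zs\<in>idx n D. (\<Sum>ys\<in>idx n D. prod_entry ms xs ys * prod_entry ns ys zs) * v zs)"
    by (subst sum.swap) (simp add: sum_distrib_right)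
  also have "\<dots> = prod_apply n D (pcomp D ms ns) v xs"
    unfolding prod_apply_def using prod_entry_comp[OF assms(1,2,3)] by simp
  finally show ?thesis .
qed

lemma prod_apply_cong:
  "(\<And>xs. xs \<in> idx n D \<Longrightarrow> v xs = w xs) \<Longrightarrow> prod_apply n D ms v = prod_apply n D ms w"
  unfolding prod_apply_def by (intro ext sum.cong) auto

lemma vnorm2_cong:
  "(\<And>xs. xs \<in> idx n D \<Longrightarrow> v xs = w xs) \<Longrightarrow> vnorm2 n D v = vnorm2 n D w"
  unfolding vnorm2_def by (intro sum.cong) auto

lemma vnorm2_nonneg: "vnorm2 n D v \<ge> 0"
  unfolding vnorm2_def by (intro sum_nonneg) auto

lemma vnorm2_complex: "complex_of_real (vnorm2 n D v) = (\<Sum>xs\<in>idx n D. cnj (v xs) * v xs)"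
  unfolding vnorm2_def by (simp only: of_real_sum complex_norm_square mult.commute)

lemma vnorm2_scale: "vnorm2 n D (\<lambda>xs. c * v xs) = (cmod c)^2 * vnorm2 n D v"
  unfolding vnorm2_def by (simp add: norm_mult power_mult_distrib sum_distrib_left)

lemma prod_apply_scale: "prod_apply n D ms (\<lambda>xs. c * v xs) = (\<lambda>xs. c * prod_apply n D ms v xs)"
  unfolding prod_apply_def by (simp add: sum_distrib_left mult.left_commute)

lemma vnorm2_zero_iff: "vnorm2 n D v = 0 \<longleftrightarrow> (\<forall>xs\<in>idx n D. v xs = 0)"
  unfolding vnorm2_def by (subst sum_nonneg_eq_0_iff) auto

lemma sum_delta_mult: "finite A \<Longrightarrow> x \<in> A \<Longrightarrow> (\<Sum>zs\<in>A. (f zs :: 'a::comm_ring_1) * (if x = zs then 1 else 0)) = f x"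
proof -
  assume "finite A" "x \<in> A"
  have "(\<Sum>zs\<in>A. f zs * (if x = zs then 1 else 0)) = (\<Sum>zs\<in>A. if x = zs then f zs else 0)"
    by (intro sum.cong) auto
  also have "\<dots> = f x" using \<open>finite A\<close> \<open>x \<in> A\<close> by (simp add: sum.delta)
  finally show ?thesis .
qed

lemma unitary_norm:
  assumes "unitary_prod n D S"
  shows "vnorm2 n D (prod_apply n D S u) = vnorm2 n D u"
proof -
  let ?P = "prod_entry S"
  have "complex_of_real (vnorm2 n D (prod_apply n D S u))
      = (\<Sum>xs\<in>idx n D. cnj (\<Sum>ys\<in>idx n D. ?P xs ys * u ys) * (\<Sum>zs\<in>idx n D. ?P xs zs * u zs))"
    by (simp add: vnorm2_complex prod_apply_def)
  also have "\<dots> = (\<Sum>xs\<in>idx n D. \<Sum>ys\<in>idx n D. \<Sum>zs\<in>idx n D. cnj (u ys) * u zs * (cnj (?P xs ys) * ?P xs zs))"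
    apply (simp only: cnj_sum sum_product) apply (intro sum.cong refl) by (simp add: mult_ac)
  also have "\<dots> = (\<Sum>ys\<in>idx n D. \<Sum>zs\<in>idx n D. cnj (u ys) * u zs * (\<Sum>xs\<in>idx n D. cnj (?P xs ys) * ?P xs zs))"
  proof -
    have "(\<Sum>xs\<in>idx n D. \<Sum>ys\<in>idx n D. \<Sum>zs\<in>idx n D. cnj (u ys) * u zs * (cnj (?P xs ys) * ?P xs zs))
      = (\<Sum>ys\<in>idx n D. \<Sum>xs\<in>idx n D. \<Sum>zs\<in>idx n D. cnj (u ys) * u zs * (cnj (?P xs ys) * ?P xs zs))"
      by (rule sum.swap)
    also have "\<dots> = (\<Sum>ys\<in>idx n D. \<Sum>zs\<in>idx n D. \<Sum>xs\<in>idx n D. cnj (u ys) * u zs * (cnj (?P xs ys) * ?P xs zs))"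
      by (rule sum.cong[OF refl], rule sum.swap)
    finally show ?thesis by (simp only: sum_distrib_left)
  qed
  also have "\<dots> = (\<Sum>ys\<in>idx n D. \<Sum>zs\<in>idx n D. cnj (u ys) * u zs * (if ys = zs then 1 else 0))"
    using assms unfolding unitary_prod_def by (intro sum.cong refl) auto
  also have "\<dots> = (\<Sum>ys\<in>idx n D. cnj (u ys) * u ys)"
    by (intro sum.cong refl) (rule sum_delta_mult[where f="\<lambda>zs. cnj (u _) * u zs"], auto)
  also have "\<dots> = complex_of_real (vnorm2 n D u)" by (simp add: vnorm2_complex)
  finally show ?thesis by (simp only: of_real_eq_iff)
qed

definition Id_lop :: lop where "Id_lop = (\<lambda>a b. if a = b then 1 else 0)"

lemma prod_apply_id:
  assumes "length ms = n" "\<And>i a b. i < n \<Longrightarrow> a < D \<Longrightarrow> b < D \<Longrightarrow> (ms!i) a b = (if a = b then 1 else 0)"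
    "xs \<in> idx n D"
  shows "prod_apply n D ms v xs = v xs"
proof -
  have E: "prod_entry ms xs ys = (if xs = ys then 1 else 0)" if "ys \<in> idx n D" for ys
  proof -
    have "prod_entry ms xs ys = (\<Prod>i<n. if xs!i = ys!i then 1 else 0)"
      unfolding prod_entry_def using assms that by (intro prod.cong) (auto simp: idx_nth)
    also have "\<dots> = (if xs = ys then 1 else 0)"
    proof (cases "xs = ys")
      case False
      have "\<not> (\<forall>i<n. xs!i = ys!i)"
        using False nth_equalityI[of xs ys] idx_len[OF assms(3)] idx_len[OF that] by auto
      then obtain i where "i < n" "xs!i \<noteq> ys!i" by auto
      hence "(\<Prod>i<n. if xs!i = ys!i then 1 else (0::complex)) = 0"
        by (intro prod_zero) auto
      thus ?thesis using False by simp
    qed simp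
    finally show ?thesis .
  qed
  have "prod_apply n D ms v xs = (\<Sum>ys\<in>idx n D. v ys * (if xs = ys then 1 else 0))"
    unfolding prod_apply_def by (rule sum.cong[OF refl]) (simp add: E mult.commute)
  thus ?thesis using assms(3) sum_delta_mult[of "idx n D" xs v] by simp
qed



definition enc :: "nat \<Rightarrow> nat list \<Rightarrow> nat list \<Rightarrow> nat list" where
  "enc d xs ys = map2 (\<lambda>x y. x*d+y) xs ys"

lemma lt_dd: "x < d \<Longrightarrow> y < (d::nat) \<Longrightarrow> x*d+y < d*d"
proof -
  assume "x < d" "y < d"
  hence "x*d + y < x*d + d" by simp
  also have "\<dots> = (x+1)*d" by simp
  also have "\<dots> \<le> d*d" using \<open>x<d\<close> by (intro mult_right_mono) auto
  finally show ?thesis .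
qed

lemma enc_idx: "xs \<in> idx n d \<Longrightarrow> ys \<in> idx n d \<Longrightarrow> enc d xs ys \<in> idx n (d*d)"
  by (auto simp: idx_iff enc_def lt_dd)

lemma enc_div: "xs \<in> idx n d \<Longrightarrow> ys \<in> idx n d \<Longrightarrow> map (\<lambda>z. z div d) (enc d xs ys) = xs"
  by (auto simp: idx_iff enc_def intro!: nth_equalityI)

lemma enc_mod: "xs \<in> idx n d \<Longrightarrow> ys \<in> idx n d \<Longrightarrow> map (\<lambda>z. z mod d) (enc d xs ys) = ys"
  by (auto simp: idx_iff enc_def intro!: nth_equalityI)

lemma div_idx: "zs \<in> idx n (d*d) \<Longrightarrow> map (\<lambda>z. z div d) zs \<in> idx n d"
  by (auto simp: idx_iff less_mult_imp_div_less)

lemma mod_idx: "zs \<in> idx n (d*d) \<Longrightarrow> map (\<lambda>z. z mod d) zs \<in> idx n d"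
proof -
  assume "zs \<in> idx n (d*d)"
  moreover have "z < d*d \<Longrightarrow> z mod d < d" for z
    by (cases "d = 0") auto
  ultimately show ?thesis by (auto simp: idx_iff)
qed

lemma enc_surj: "zs \<in> idx n (d*d) \<Longrightarrow> enc d (map (\<lambda>z. z div d) zs) (map (\<lambda>z. z mod d) zs) = zs"
  by (auto simp: idx_iff enc_def intro!: nth_equalityI)

lemma enc_inj: "xs \<in> idx n d \<Longrightarrow> ys \<in> idx n d \<Longrightarrow> xs' \<in> idx n d \<Longrightarrow> ys' \<in> idx n d \<Longrightarrow>
   enc d xs ys = enc d xs' ys' \<Longrightarrow> xs = xs' \<and> ys = ys'"
  by (metis enc_div enc_mod)

lemma sum_pair:
  "(\<Sum>zs\<in>idx n (d*d). F zs) = (\<Sum>xs\<in>idx n d. \<Sum>ys\<in>idx n d. F (enc d xs ys))"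
proof -
  have bij: "bij_betw (\<lambda>(xs,ys). enc d xs ys) (idx n d \<times> idx n d) (idx n (d*d))"
    unfolding bij_betw_def
  proof
    show "inj_on (\<lambda>(xs,ys). enc d xs ys) (idx n d \<times> idx n d)"
    proof (rule inj_onI)
      fix p q assume "p \<in> idx n d \<times> idx n d" "q \<in> idx n d \<times> idx n d"
        "(\<lambda>(xs,ys). enc d xs ys) p = (\<lambda>(xs,ys). enc d xs ys) q"
      thus "p = q" using enc_inj[of "fst p" n d "snd p" "fst q" "snd q"]
        by (simp add: case_prod_unfold mem_Times_iff prod_eq_iff)
    qed
    show "(\<lambda>(xs,ys). enc d xs ys) ` (idx n d \<times> idx n d) = idx n (d*d)"
    proof
      show "(\<lambda>(xs,ys). enc d xs ys) ` (idx n d \<times> idx n d) \<subseteq> idx n (d*d)"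
        by (auto simp: enc_idx)
      show "idx n (d*d) \<subseteq> (\<lambda>(xs,ys). enc d xs ys) ` (idx n d \<times> idx n d)"
      proof
        fix zs assume z: "zs \<in> idx n (d*d)"
        hence "zs = (\<lambda>(xs,ys). enc d xs ys) (map (\<lambda>z. z div d) zs, map (\<lambda>z. z mod d) zs)"
          by (simp add: enc_surj)
        thus "zs \<in> (\<lambda>(xs,ys). enc d xs ys) ` (idx n d \<times> idx n d)"
          using z div_idx mod_idx by blast
      qed
    qed
  qed
  have "(\<Sum>zs\<in>idx n (d*d). F zs) = (\<Sum>p\<in>idx n d \<times> idx n d. F ((\<lambda>(xs,ys). enc d xs ys) p))"
    by (rule sum.reindex_bij_betw[OF bij, symmetric])
  also have "\<dots> = (\<Sum>xs\<in>idx n d. \<Sum>ys\<in>idx n d. F (enc d xs ys))"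
    by (simp add: sum.cartesian_product case_prod_unfold)
  finally show ?thesis .
qed

definition pairop :: "nat \<Rightarrow> lop \<Rightarrow> lop \<Rightarrow> lop" where
  "pairop d A B = (\<lambda>z w. A (z div d) (w div d) * B (z mod d) (w mod d))"

definition pairops :: "nat \<Rightarrow> lop list \<Rightarrow> lop list \<Rightarrow> lop list" where
  "pairops d g1 g2 = map2 (pairop d) g1 g2"

lemma length_pairops[simp]: "length (pairops d g1 g2) = min (length g1) (length g2)"
  by (simp add: pairops_def)

lemma prod_entry_pair:
  assumes "length g1 = n" "length g2 = n" "xs \<in> idx n d" "ys \<in> idx n d" "xs' \<in> idx n d" "ys' \<in> idx n d"
  shows "prod_entry (pairops d g1 g2) (enc d xs ys) (enc d xs' ys') = prod_entry g1 xs xs' * prod_entry g2 ys ys'"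
proof -
  have "prod_entry (pairops d g1 g2) (enc d xs ys) (enc d xs' ys')
      = (\<Prod>i<n. (g1!i) (xs!i) (xs'!i) * (g2!i) (ys!i) (ys'!i))"
    unfolding prod_entry_def using assms
    by (intro prod.cong) (auto simp: pairops_def pairop_def enc_def idx_iff)
  thus ?thesis using assms by (simp add: prod.distrib prod_entry_def)
qed

lemma tensor2_enc: "xs \<in> idx n d \<Longrightarrow> ys \<in> idx n d \<Longrightarrow> tensor2 d a b (enc d xs ys) = a xs * b ys"
  by (simp add: tensor2_def enc_div enc_mod)

lemma apply_pair:
  assumes "length g1 = n" "length g2 = n" "xs \<in> idx n d" "ys \<in> idx n d"
  shows "prod_apply n (d*d) (pairops d g1 g2) u (enc d xs ys)
     = (\<Sum>xs'\<in>idx n d. prod_entry g1 xs xs' * (\<Sum>ys'\<in>idx n d. prod_entry g2 ys ys' * u (enc d xs' ys')))"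
  unfolding prod_apply_def sum_pair
  using assms by (simp add: prod_entry_pair sum_distrib_left mult.assoc)

lemma apply_pair_tensor:
  assumes "length g1 = n" "length g2 = n" "zs \<in> idx n (d*d)"
  shows "prod_apply n (d*d) (pairops d g1 g2) (tensor2 d a b) zs
       = tensor2 d (prod_apply n d g1 a) (prod_apply n d g2 b) zs"
proof -
  define xs where "xs = map (\<lambda>z. z div d) zs"
  define ys where "ys = map (\<lambda>z. z mod d) zs"
  have x: "xs \<in> idx n d" and y: "ys \<in> idx n d" and z: "zs = enc d xs ys"
    using assms(3) by (auto simp: xs_def ys_def div_idx mod_idx enc_surj)
  have "prod_apply n (d*d) (pairops d g1 g2) (tensor2 d a b) zs
     = (\<Sum>xs'\<in>idx n d. prod_entry g1 xs xs' * (\<Sum>ys'\<in>idx n d. prod_entry g2 ys ys' * (a xs' * b ys')))"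
    unfolding z by (simp add: apply_pair[OF assms(1,2) x y] tensor2_enc cong: sum.cong)
  also have "\<dots> = (\<Sum>xs'\<in>idx n d. (prod_entry g1 xs xs' * a xs') * (\<Sum>ys'\<in>idx n d. prod_entry g2 ys ys' * b ys'))"
    by (intro sum.cong refl) (simp add: sum_distrib_left mult_ac)
  also have "\<dots> = prod_apply n d g1 a xs * prod_apply n d g2 b ys"
    unfolding prod_apply_def by (simp add: sum_distrib_right)
  also have "\<dots> = tensor2 d (prod_apply n d g1 a) (prod_apply n d g2 b) zs"
    using tensor2_enc[OF x y] z by simp
  finally show ?thesis .
qed

lemma vnorm2_tensor: "vnorm2 n (d*d) (tensor2 d a b) = vnorm2 n d a * vnorm2 n d b"
  unfolding vnorm2_def sum_pair
  by (simp add: tensor2_enc norm_mult power_mult_distrib sum_product cong: sum.cong)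

lemma sum_pair_nat: "(\<Sum>k<d*d. (f k :: 'a::comm_monoid_add)) = (\<Sum>a<d. \<Sum>b<d. f (a*(d::nat)+b))"
proof -
  have bij: "bij_betw (\<lambda>(a,b). a*d+b) ({..<d} \<times> {..<d}) {..<d*d}"
    unfolding bij_betw_def
  proof
    show "inj_on (\<lambda>(a,b). a*d+b) ({..<d} \<times> {..<d})"
    proof (rule inj_onI, clarsimp)
      fix a b a' b' assume "a < d" "b < d" "a' < d" "b' < d" "a*d+b = a'*d+b'"
      hence "(a*d+b) div d = (a'*d+b') div d" "(a*d+b) mod d = (a'*d+b') mod d" by simp_all
      thus "a = a' \<and> b = b'" using \<open>b<d\<close> \<open>b'<d\<close> by simp
    qed
    show "(\<lambda>(a,b). a*d+b) ` ({..<d} \<times> {..<d}) = {..<d*d}"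
    proof
      show "(\<lambda>(a,b). a*d+b) ` ({..<d} \<times> {..<d}) \<subseteq> {..<d*d}" by (auto simp: lt_dd)
      show "{..<d*d} \<subseteq> (\<lambda>(a,b). a*d+b) ` ({..<d} \<times> {..<d})"
      proof
        fix k assume k: "k \<in> {..<d*d}"
        hence "d > 0" by (cases d) auto
        have "k = (\<lambda>(a,b). a*d+b) (k div d, k mod d)" by simp
        moreover have "k div d < d" "k mod d < d" using k \<open>d>0\<close> by (auto simp: less_mult_imp_div_less)
        ultimately show "k \<in> (\<lambda>(a,b). a*d+b) ` ({..<d} \<times> {..<d})" by blast
      qed
    qed
  qed
  have "(\<Sum>k<d*d. f k) = (\<Sum>p\<in>{..<d} \<times> {..<d}. f ((\<lambda>(a,b). a*d+b) p))"
    by (rule sum.reindex_bij_betw[OF bij, symmetric])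
  also have "\<dots> = (\<Sum>a<d. \<Sum>b<d. f (a*d+b))"
    by (simp add: sum.cartesian_product case_prod_unfold)
  finally show ?thesis .
qed

lemma invertible_pairop:
  assumes "invertible_lop d A" "invertible_lop d B"
  shows "invertible_lop (d*d) (pairop d A B)"
proof -
  obtain NA where NA: "\<forall>i<d. \<forall>j<d. (\<Sum>k<d. A i k * NA k j) = (if i = j then 1 else 0) \<and>
      (\<Sum>k<d. NA i k * A k j) = (if i = j then 1 else 0)" using assms(1) by (auto simp: invertible_lop_def)
  obtain NB where NB: "\<forall>i<d. \<forall>j<d. (\<Sum>k<d. B i k * NB k j) = (if i = j then 1 else 0) \<and>
      (\<Sum>k<d. NB i k * B k j) = (if i = j then 1 else 0)" using assms(2) by (auto simp: invertible_lop_def)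
  have key: "(\<Sum>k<d*d. pairop d M1 M2 i k * pairop d N1 N2 k j) =
     (\<Sum>a<d. M1 (i div d) a * N1 a (j div d)) * (\<Sum>b<d. M2 (i mod d) b * N2 b (j mod d))"
    for M1 M2 N1 N2 :: lop and i j
    unfolding sum_pair_nat pairop_def
    by (simp add: sum_product mult_ac)
  have dm: "i < d*d \<Longrightarrow> i div d < d \<and> i mod d < d" for i
    by (cases "d = 0") (auto simp: less_mult_imp_div_less)
  have eq: "i < d*d \<Longrightarrow> j < d*d \<Longrightarrow> (i div d = j div d \<and> i mod d = j mod d) \<longleftrightarrow> i = j" for i j
    by (metis div_mult_mod_eq)
  show ?thesis unfolding invertible_lop_def
  proof (rule exI[of _ "pairop d NA NB"], intro allI impI conjI)
    fix i j assume ij: "i < d*d" "j < d*d"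
    show "(\<Sum>k<d*d. pairop d A B i k * pairop d NA NB k j) = (if i = j then 1 else 0)"
      using NA NB dm[OF ij(1)] dm[OF ij(2)] eq[OF ij] by (simp add: key) (metis div_mult_mod_eq)
    show "(\<Sum>k<d*d. pairop d NA NB i k * pairop d A B k j) = (if i = j then 1 else 0)"
      using NA NB dm[OF ij(1)] dm[OF ij(2)] eq[OF ij] by (simp add: key) (metis div_mult_mod_eq)
  qed
qed



lemma prod_entry_split:
  assumes "length ms = n" "j < n"
  shows "prod_entry ms xs ys = (ms!j) (xs!j) (ys!j) * (\<Prod>i\<in>{..<n}-{j}. (ms!i) (xs!i) (ys!i))"
  unfolding prod_entry_def assms(1) using assms(2) by (subst prod.remove[of _ j]) auto

lemma upd_idx: "xs \<in> idx n D \<Longrightarrow> k < D \<Longrightarrow> xs[j:=k] \<in> idx n D"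
  unfolding idx_def by (auto dest: set_update_subset_insert[THEN subsetD])

lemma single_apply:
  assumes "length T = n" "j < n" "\<And>i. i < n \<Longrightarrow> i \<noteq> j \<Longrightarrow> T!i = Id_lop" "xs \<in> idx n D"
  shows "prod_apply n D T v xs = (\<Sum>k<D. (T!j) (xs!j) k * v (xs[j:=k]))"
proof -
  have lx: "length xs = n" using assms(4) by (simp add: idx_len)
  let ?R = "(\<lambda>k. xs[j:=k]) ` {..<D}"
  have PE: "prod_entry T xs ys = (T!j) (xs!j) (ys!j) * (\<Prod>i\<in>{..<n}-{j}. Id_lop (xs!i) (ys!i))" for ys
  proof -
    have "(\<Prod>i\<in>{..<n}-{j}. (T!i) (xs!i) (ys!i)) = (\<Prod>i\<in>{..<n}-{j}. Id_lop (xs!i) (ys!i))"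
      by (rule prod.cong) (auto simp: assms(3))
    thus ?thesis using prod_entry_split[OF assms(1,2)] by simp
  qed
  have sub: "?R \<subseteq> idx n D" using upd_idx[OF assms(4)] by auto
  have zero: "prod_entry T xs ys * v ys = 0" if "ys \<in> idx n D - ?R" for ys
  proof -
    have ly: "length ys = n" using that idx_len by blast
    have "\<exists>i\<in>{..<n}-{j}. xs!i \<noteq> ys!i"
    proof (rule ccontr)
      assume "\<not> ?thesis"
      hence "ys = xs[j := ys!j]" using lx ly assms(2) by (intro nth_equalityI) (auto simp: nth_list_update)
      moreover have "ys!j < D" using that assms(2) idx_nth by blast
      ultimately show False using that by blast
    qed
    then obtain i where "i \<in> {..<n}-{j}" "xs!i \<noteq> ys!i" by blast
    hence "(\<Prod>i\<in>{..<n}-{j}. Id_lop (xs!i) (ys!i)) = 0"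
      by (intro prod_zero) (auto simp: Id_lop_def)
    thus ?thesis by (simp add: PE)
  qed
  have "prod_apply n D T v xs = (\<Sum>ys\<in>?R. prod_entry T xs ys * v ys)"
    unfolding prod_apply_def using zero by (intro sum.mono_neutral_right[OF finite_idx sub]) blast
  also have "\<dots> = (\<Sum>k<D. prod_entry T xs (xs[j:=k]) * v (xs[j:=k]))"
  proof (rule sum.reindex_cong[where l="\<lambda>k. xs[j:=k]"])
    show "inj_on (\<lambda>k. xs[j:=k]) {..<D}"
      using assms(2) lx by (auto simp: inj_on_def) (metis nth_list_update_eq)
  qed auto
  also have "\<dots> = (\<Sum>k<D. (T!j) (xs!j) k * v (xs[j:=k]))"
    using assms(2) lx by (intro sum.cong refl) (simp add: PE Id_lop_def nth_list_update)
  finally show ?thesis .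
qed


lemma left_null_kills:
  assumes "length S = n" "j < n" "\<forall>xs\<in>idx n D. prod_apply n D S psi xs = psi xs"
    "\<forall>l<D. (\<Sum>k<D. w k * (S!j) k l) = 0" "xs \<in> idx n D"
  shows "(\<Sum>k<D. w k * psi (xs[j:=k])) = 0"
proof -
  have lx: "length xs = n" using assms(5) by (simp add: idx_len)
  let ?Q = "\<lambda>ys. (\<Prod>i\<in>{..<n}-{j}. (S!i) (xs!i) (ys!i))"
  have "(\<Sum>k<D. w k * psi (xs[j:=k])) = (\<Sum>k<D. w k * prod_apply n D S psi (xs[j:=k]))"
    using assms(3) upd_idx[OF assms(5)] by (intro sum.cong refl) simp
  also have "\<dots> = (\<Sum>k<D. \<Sum>ys\<in>idx n D. w k * ((S!j) k (ys!j) * ?Q ys * psi ys))"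
  proof -
    have Q: "(\<Prod>i\<in>{..<n}-{j}. (S!i) (xs[j:=k]!i) (ys!i)) = ?Q ys" for k ys
      by (rule prod.cong) (auto simp: lx)
    show ?thesis unfolding prod_apply_def
      by (intro sum.cong refl) (simp add: sum_distrib_left prod_entry_split[OF assms(1,2)] assms(2) lx Q)
  qed
  also have "\<dots> = (\<Sum>ys\<in>idx n D. (\<Sum>k<D. w k * (S!j) k (ys!j)) * (?Q ys * psi ys))"
    by (subst sum.swap) (simp add: sum_distrib_left sum_distrib_right mult_ac)
  also have "\<dots> = 0"
    using assms(2,4) by (intro sum.neutral) (auto simp: idx_nth)
  finally show ?thesis .
qed

lemma if01_mult[simp]: "(if P then 1 else 0) * (a::complex) = (if P then a else 0)"
  "a * (if P then 1 else 0) = (if P then a else 0)" by auto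

lemma cnj_mult_self: "cnj z * z = complex_of_real ((cmod z)^2)"
  by (subst complex_norm_square) (rule mult.commute)

lemma stab_noninv_False:
  assumes stab: "\<forall>S. length S = n \<longrightarrow> (\<forall>i<n. invertible_lop D (S!i)) \<longrightarrow>
           (\<forall>xs\<in>idx n D. prod_apply n D S psi xs = psi xs) \<longrightarrow> unitary_prod n D S"
    and S: "length S = n" "\<forall>xs\<in>idx n D. prod_apply n D S psi xs = psi xs" "j < n"
    and null: "a0 < D" "w a0 \<noteq> 0" "\<forall>l<D. (\<Sum>k<D. w k * (S!j) k l) = 0"
  shows False
proof -
  define Tj :: lop where "Tj = (\<lambda>a b. (if a = b then 1 else 0) + cnj (w a) * w b)"
  define T where "T = (replicate n Id_lop)[j := Tj]"
  have lT: "length T = n" by (simp add: T_def)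
  have Tj: "T!j = Tj" using S(3) by (simp add: T_def)
  have Ti: "T!i = Id_lop" if "i < n" "i \<noteq> j" for i using that by (simp add: T_def)
  have Tpsi: "prod_apply n D T psi xs = psi xs" if xs: "xs \<in> idx n D" for xs
  proof -
    have xj: "xs!j < D" using xs S(3) idx_nth by blast
    have lx: "length xs = n" using xs idx_len by blast
    have "prod_apply n D T psi xs = (\<Sum>k<D. Tj (xs!j) k * psi (xs[j:=k]))"
      using single_apply[OF lT S(3) Ti xs] Tj by simp
    also have "\<dots> = (\<Sum>k<D. (if xs!j = k then psi (xs[j:=k]) else 0))
        + cnj (w (xs!j)) * (\<Sum>k<D. w k * psi (xs[j:=k]))"
      by (simp add: Tj_def distrib_right sum.distrib sum_distrib_left mult.assoc)
    also have "\<dots> = psi xs"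
      using xj lx left_null_kills[OF S(1,3,2) null(3) xs] by simp
    finally show ?thesis .
  qed
  define s where "s = (\<Sum>k<D. cnj (w k) * w k)"
  define r where "r = (\<Sum>k<D. (cmod (w k))^2)"
  have sr: "s = complex_of_real r" by (simp add: s_def r_def cnj_mult_self)
  have r0: "r \<ge> 0" unfolding r_def by (intro sum_nonneg) auto
  have s1: "1 + s \<noteq> 0"
  proof
    assume "1 + s = 0"
    hence "complex_of_real (1 + r) = 0" by (simp add: sr)
    hence "1 + r = 0" by (simp only: of_real_eq_0_iff)
    thus False using r0 by linarith
  qed
  define N :: lop where "N = (\<lambda>a b. (if a = b then 1 else 0) - cnj (w a) * w b / (1 + s))"
  have invTj: "invertible_lop D Tj"
    unfolding invertible_lop_def
  proof (rule exI[of _ N], intro allI impI conjI)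
    fix i j assume ij: "i < D" "j < D"
    have "(\<Sum>k<D. Tj i k * N k j) = (\<Sum>k<D. if i = k then N k j else 0) + cnj (w i) * (\<Sum>k<D. w k * N k j)"
      by (simp add: Tj_def distrib_right sum.distrib sum_distrib_left mult.assoc)
    also have "(\<Sum>k<D. w k * N k j) = w j - s * w j / (1 + s)"
      using ij by (simp add: N_def right_diff_distrib sum_subtractf s_def sum_divide_distrib[symmetric]
          sum_distrib_right[symmetric] mult.assoc mult.left_commute) (simp add: sum_distrib_left mult_ac)
    also have "w j - s * w j / (1 + s) = w j / (1 + s)"
      using s1 by (simp add: field_simps)
    finally show "(\<Sum>k<D. Tj i k * N k j) = (if i = j then 1 else 0)"
      using ij by (simp add: N_def)
  next
    fix i j assume ij: "i < D" "j < D"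
    have "(\<Sum>k<D. N i k * Tj k j) = (\<Sum>k<D. if k = j then N i k else 0) + (\<Sum>k<D. N i k * cnj (w k)) * w j"
      by (simp add: Tj_def distrib_left sum.distrib sum_distrib_right mult.assoc)
    also have "(\<Sum>k<D. N i k * cnj (w k)) = cnj (w i) - cnj (w i) * s / (1 + s)"
      using ij by (simp add: N_def left_diff_distrib sum_subtractf s_def sum_divide_distrib[symmetric]
          sum_distrib_left[symmetric] mult.assoc mult.left_commute) (simp add: sum_distrib_left mult_ac)
    also have "cnj (w i) - cnj (w i) * s / (1 + s) = cnj (w i) / (1 + s)"
      using s1 by (simp add: field_simps)
    finally show "(\<Sum>k<D. N i k * Tj k j) = (if i = j then 1 else 0)"
      using ij by (simp add: N_def)
  qed
  have invId: "invertible_lop D Id_lop"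
    unfolding invertible_lop_def by (rule exI[of _ Id_lop]) (simp add: Id_lop_def)
  have inv: "\<forall>i<n. invertible_lop D (T!i)"
    using invTj invId Tj Ti by metis
  have U: "unitary_prod n D T" using stab lT inv Tpsi by blast
  define e where "e = (replicate n 0)[j := a0]"
  have e: "e \<in> idx n D" using null(1) S(3) by (auto simp: e_def idx_iff nth_list_update)
  have ej: "e!j = a0" using S(3) by (simp add: e_def)
  have ei: "e!i = 0" if "i < n" "i \<noteq> j" for i using that by (simp add: e_def)
  have h1: "(\<Sum>zs\<in>idx n D. cnj (prod_entry T zs e) * prod_entry T zs e) = 1"
    using U e unfolding unitary_prod_def by auto
  have h2: "(\<Sum>zs\<in>idx n D. cnj (prod_entry T zs e) * prod_entry T zs e)
      = (\<Prod>i<n. \<Sum>z<D. cnj ((T!i) z (e!i)) * (T!i) z (e!i))"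
    unfolding prod_entry_def lT by (simp add: cnj_prod prod.distrib[symmetric])
      (rule sum_prod_idx[where f="\<lambda>i z. cnj ((T!i) z (e!i)) * (T!i) z (e!i)"])
  have h3: "(\<Prod>i<n. \<Sum>z<D. cnj ((T!i) z (e!i)) * (T!i) z (e!i)) = (\<Sum>z<D. cnj (Tj z a0) * Tj z a0)"
  proof -
    have "(\<Prod>i<n. \<Sum>z<D. cnj ((T!i) z (e!i)) * (T!i) z (e!i))
       = (\<Sum>z<D. cnj ((T!j) z (e!j)) * (T!j) z (e!j)) * (\<Prod>i\<in>{..<n}-{j}. \<Sum>z<D. cnj ((T!i) z (e!i)) * (T!i) z (e!i))"
      using S(3) by (subst prod.remove[of _ j]) auto
    also have "(\<Prod>i\<in>{..<n}-{j}. \<Sum>z<D. cnj ((T!i) z (e!i)) * (T!i) z (e!i)) = 1"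
      using null(1) by (intro prod.neutral) (auto simp: Ti ei Id_lop_def)
    finally show ?thesis by (simp add: Tj ej)
  qed
  have h4: "(\<Sum>z<D. cnj (Tj z a0) * Tj z a0) = complex_of_real (\<Sum>z<D. (cmod (Tj z a0))^2)"
    by (simp add: cnj_mult_self)
  have h5: "(\<Sum>z<D. (cmod (Tj z a0))^2) > 1"
  proof -
    have "(cmod (Tj a0 a0))^2 \<le> (\<Sum>z<D. (cmod (Tj z a0))^2)"
      using null(1) by (intro member_le_sum) auto
    moreover have "Tj a0 a0 = complex_of_real (1 + (cmod (w a0))^2)"
      by (simp add: Tj_def cnj_mult_self)
    hence "cmod (Tj a0 a0) = \<bar>1 + (cmod (w a0))^2\<bar>" by (simp only: norm_of_real)
    hence "cmod (Tj a0 a0) = 1 + (cmod (w a0))^2" by simp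
    moreover have "(cmod (w a0))^2 > 0" using null(2) by simp
    ultimately show ?thesis
    proof -
      assume A: "(cmod (Tj a0 a0))^2 \<le> (\<Sum>z<D. (cmod (Tj z a0))^2)"
        "cmod (Tj a0 a0) = 1 + (cmod (w a0))^2" "(cmod (w a0))^2 > 0"
      define a where "a = (cmod (w a0))^2"
      have "(1 + a)^2 = 1 + (2*a + a*a)" by (simp add: power2_eq_square algebra_simps)
      moreover have "2*a + a*a > 0" using A(3) unfolding a_def[symmetric]
        by (simp add: add_pos_nonneg)
      ultimately have "(1 + a)^2 > 1" by linarith
      thus ?thesis using A(1,2) by (simp add: a_def)
    qed
  qed
  have "complex_of_real (\<Sum>z<D. (cmod (Tj z a0))^2) = 1" using h1 h2 h3 h4 by metis
  hence "(\<Sum>z<D. (cmod (Tj z a0))^2) = 1" by (simp only: of_real_eq_1_iff)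
  thus False using h5 by linarith
qed



definition qset :: "nat \<Rightarrow> nat \<Rightarrow> lop list \<Rightarrow> real set" where
  "qset n D g = {t. \<forall>u. t * vnorm2 n D u \<le> vnorm2 n D (prod_apply n D g u)}"

definition qv :: "nat \<Rightarrow> nat \<Rightarrow> lop list \<Rightarrow> real" where
  "qv n D g = Sup (qset n D g)"

lemma delta_vnorm2: "e \<in> idx n D \<Longrightarrow> vnorm2 n D (\<lambda>xs. if xs = e then 1 else 0) = 1"
proof -
  assume e: "e \<in> idx n D"
  have "vnorm2 n D (\<lambda>xs. if xs = e then 1 else 0) = (\<Sum>xs\<in>idx n D. if xs = e then 1 else 0)"
    unfolding vnorm2_def by (rule sum.cong) auto
  also have "\<dots> = 1" using e by (simp add: sum.delta)
  finally show ?thesis .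
qed

lemma qset_bdd: assumes "idx n D \<noteq> {}" shows "bdd_above (qset n D g)"
proof -
  obtain e where e: "e \<in> idx n D" using assms by blast
  let ?u = "\<lambda>xs. if xs = e then 1 else (0::complex)"
  show ?thesis unfolding bdd_above_def
  proof (rule exI[of _ "vnorm2 n D (prod_apply n D g ?u)"], intro ballI)
    fix t assume "t \<in> qset n D g"
    hence "t * vnorm2 n D ?u \<le> vnorm2 n D (prod_apply n D g ?u)" by (simp add: qset_def)
    thus "t \<le> vnorm2 n D (prod_apply n D g ?u)" using delta_vnorm2[OF e] by simp
  qed
qed

lemma qset_0: "0 \<in> qset n D g" by (simp add: qset_def vnorm2_nonneg)

lemma q_upper: "idx n D \<noteq> {} \<Longrightarrow> t \<in> qset n D g \<Longrightarrow> t \<le> qv n D g"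
  unfolding qv_def by (rule cSup_upper) (auto simp: qset_bdd)

lemma q_nonneg: "idx n D \<noteq> {} \<Longrightarrow> 0 \<le> qv n D g"
  using q_upper qset_0 by blast

lemma q_mem: assumes "idx n D \<noteq> {}"
  shows "qv n D g * vnorm2 n D u \<le> vnorm2 n D (prod_apply n D g u)"
proof (cases "vnorm2 n D u = 0")
  case True thus ?thesis by (simp add: vnorm2_nonneg)
next
  case False
  hence pos: "vnorm2 n D u > 0" using vnorm2_nonneg[of n D u] by linarith
  have "qv n D g \<le> vnorm2 n D (prod_apply n D g u) / vnorm2 n D u"
    unfolding qv_def
  proof (rule cSup_least)
    show "qset n D g \<noteq> {}" using qset_0 by blast
    fix t assume "t \<in> qset n D g"
    hence "t * vnorm2 n D u \<le> vnorm2 n D (prod_apply n D g u)" by (simp add: qset_def)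
    thus "t \<le> vnorm2 n D (prod_apply n D g u) / vnorm2 n D u" using pos by (simp add: field_simps)
  qed
  thus ?thesis using pos by (simp add: field_simps)
qed

lemma q_approx: assumes "idx n D \<noteq> {}" "e > 0"
  shows "\<exists>u. vnorm2 n D u > 0 \<and> vnorm2 n D (prod_apply n D g u) \<le> (qv n D g + e) * vnorm2 n D u"
proof -
  have "qv n D g + e \<notin> qset n D g" using q_upper[OF assms(1)] assms(2) by force
  then obtain u where u: "(qv n D g + e) * vnorm2 n D u > vnorm2 n D (prod_apply n D g u)"
    by (auto simp: qset_def not_le)
  have "vnorm2 n D u > 0"
  proof (rule ccontr)
    assume "\<not> ?thesis"
    hence "vnorm2 n D u = 0" using vnorm2_nonneg[of n D u] by linarith
    thus False using u vnorm2_nonneg[of n D "prod_apply n D g u"] by simp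
  qed
  thus ?thesis using u by (intro exI[of _ u]) auto
qed

lemma apply_nil: "length ms = 0 \<Longrightarrow> xs \<in> idx 0 D \<Longrightarrow> prod_apply 0 D ms u xs = u xs"
  by (simp add: prod_apply_def prod_entry_def idx_0)

lemma qv_0: assumes "length g = 0" shows "qv 0 D g = 1"
proof -
  have eq: "vnorm2 0 D (prod_apply 0 D g u) = vnorm2 0 D u" for u
    by (rule vnorm2_cong) (simp add: apply_nil assms)
  have ne: "idx 0 D \<noteq> {}" by (simp add: idx_0)
  have "1 \<in> qset 0 D g" by (simp add: qset_def eq)
  hence "1 \<le> qv 0 D g" by (rule q_upper[OF ne])
  moreover have "qv 0 D g * vnorm2 0 D (\<lambda>_. 1) \<le> vnorm2 0 D (\<lambda>_. 1)"
    using q_mem[OF ne, of g "\<lambda>_. 1"] by (simp add: eq)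
  moreover have "vnorm2 0 D (\<lambda>_. 1) = 1" by (simp add: vnorm2_def idx_0)
  ultimately show ?thesis by simp
qed

definition scl :: "complex \<Rightarrow> lop list \<Rightarrow> lop list" where
  "scl c ms = (case ms of [] \<Rightarrow> [] | m # r \<Rightarrow> (\<lambda>i j. c * m i j) # r)"

lemma length_scl[simp]: "length (scl c ms) = length ms"
  by (cases ms) (auto simp: scl_def)

lemma prod_entry_scl: "ms \<noteq> [] \<Longrightarrow> prod_entry (scl c ms) xs ys = c * prod_entry ms xs ys"
proof (cases ms)
  case (Cons m r)
  have "prod_entry (scl c ms) xs ys = (\<Prod>i<Suc (length r). (((\<lambda>i j. c * m i j) # r)!i) (xs!i) (ys!i))"
    by (simp add: prod_entry_def scl_def Cons)
  also have "\<dots> = c * m (xs!0) (ys!0) * (\<Prod>i<length r. (r!i) (xs!Suc i) (ys!Suc i))"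
    by (simp only: prod.lessThan_Suc_shift) simp
  also have "\<dots> = c * prod_entry ms xs ys"
    by (simp add: prod_entry_def Cons prod.lessThan_Suc_shift del: prod.lessThan_Suc)
  finally show ?thesis .
qed simp

lemma prod_apply_scl: "ms \<noteq> [] \<Longrightarrow> prod_apply n D (scl c ms) u xs = c * prod_apply n D ms u xs"
  by (simp add: prod_apply_def prod_entry_scl sum_distrib_left mult.assoc)

lemma nth_scl_inv:
  assumes "i < length ms" "invertible_lop D ((scl c ms)!i)" "c \<noteq> 0"
  shows "invertible_lop D (ms!i)"
proof (cases ms)
  case Nil thus ?thesis using assms by simp
next
  case (Cons m r)
  show ?thesis
  proof (cases i)
    case 0
    from assms(2) obtain N where N: "\<forall>a<D. \<forall>b<D. (\<Sum>k<D. c * m a k * N k b) = (if a = b then 1 else 0) \<and>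
      (\<Sum>k<D. N a k * (c * m k b)) = (if a = b then 1 else 0)"
      by (auto simp: invertible_lop_def scl_def Cons 0)
    show ?thesis unfolding invertible_lop_def Cons 0
    proof (rule exI[of _ "\<lambda>a b. c * N a b"], intro allI impI conjI)
      fix a b assume ab: "a < D" "b < D"
      show "(\<Sum>k<D. ((m # r) ! 0) a k * (c * N k b)) = (if a = b then 1 else 0)"
        using N ab by (simp add: mult_ac)
      show "(\<Sum>k<D. c * N a k * ((m # r) ! 0) k b) = (if a = b then 1 else 0)"
        using N ab by (simp add: mult_ac)
    qed
  next
    case (Suc i') thus ?thesis using assms by (simp add: scl_def Cons)
  qed
qed

lemma stab_inv:
  assumes LN: "\<And>A. \<not> invertible_lop D A \<Longrightarrow> \<exists>w a0. a0 < D \<and> w a0 \<noteq> 0 \<and> (\<forall>l<D. (\<Sum>k<D. w k * A k l) = 0)"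
    and stab: "\<forall>S. length S = n \<longrightarrow> (\<forall>i<n. invertible_lop D (S!i)) \<longrightarrow>
           (\<forall>xs\<in>idx n D. prod_apply n D S psi xs = psi xs) \<longrightarrow> unitary_prod n D S"
    and S: "length S = n" "\<forall>xs\<in>idx n D. prod_apply n D S psi xs = psi xs"
  shows "\<forall>i<n. invertible_lop D (S!i)"
proof (intro allI impI, rule ccontr)
  fix j assume j: "j < n" "\<not> invertible_lop D (S!j)"
  then obtain w a0 where "a0 < D" "w a0 \<noteq> 0" "\<forall>l<D. (\<Sum>k<D. w k * (S!j) k l) = 0"
    using LN by blast
  thus False using stab_noninv_False[OF stab S j(1)] by blast
qed

lemma succ_le: "sep_op n D Ks \<Longrightarrow> succ_prob n D Ks a b \<le> vnorm2 n D a"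
proof -
  assume "sep_op n D Ks"
  hence "(\<Sum>ms\<leftarrow>Ks. vnorm2 n D (prod_apply n D ms a)) \<le> vnorm2 n D a" by (simp add: sep_op_def)
  moreover have "succ_prob n D Ks a b \<le> (\<Sum>ms\<leftarrow>Ks. vnorm2 n D (prod_apply n D ms a))"
    unfolding succ_prob_def by (rule sum_list_mono) (simp add: vnorm2_nonneg)
  ultimately show ?thesis by linarith
qed

lemma sep_nil: "sep_op n D []" by (simp add: sep_op_def vnorm2_nonneg)

lemma pmax_bdd: "bdd_above {succ_prob n D Ks a b | Ks. sep_op n D Ks}"
  unfolding bdd_above_def using succ_le by blast



lemma lemA:
  assumes LN: "\<And>A. \<not> invertible_lop D A \<Longrightarrow> \<exists>w a0. a0 < D \<and> w a0 \<noteq> 0 \<and> (\<forall>l<D. (\<Sum>k<D. w k * A k l) = 0)"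
    and psi1: "vnorm2 n D psi = 1"
    and stab: "\<forall>S. length S = n \<longrightarrow> (\<forall>i<n. invertible_lop D (S!i)) \<longrightarrow>
           (\<forall>xs\<in>idx n D. prod_apply n D S psi xs = psi xs) \<longrightarrow> unitary_prod n D S"
    and g: "length g = n" "\<forall>i<n. invertible_lop D (g!i)"
  shows "pmax_sep n D (normalize_state n D (prod_apply n D g psi)) psi
       = qv n D g / vnorm2 n D (prod_apply n D g psi)"
proof -
  have ne: "idx n D \<noteq> {}" using psi1 by (auto simp: vnorm2_def)
  have "\<forall>i. \<exists>N. i < n \<longrightarrow> (\<forall>a<D. \<forall>b<D. (\<Sum>k<D. (g!i) a k * N k b) = (if a = b then 1 else 0) \<and>
      (\<Sum>k<D. N a k * (g!i) k b) = (if a = b then 1 else 0))"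
    using g(2) unfolding invertible_lop_def by blast
  from choice[OF this] obtain F where F: "\<And>i a b. i < n \<Longrightarrow> a < D \<Longrightarrow> b < D \<Longrightarrow>
      (\<Sum>k<D. (g!i) a k * F i k b) = (if a = b then 1 else 0) \<and>
      (\<Sum>k<D. F i a k * (g!i) k b) = (if a = b then 1 else 0)" by blast
  define gi where "gi = map F [0..<n]"
  have lgi: "length gi = n" by (simp add: gi_def)
  have gin: "i < n \<Longrightarrow> gi!i = F i" for i by (simp add: gi_def)
  have left: "prod_apply n D gi (prod_apply n D g u) xs = u xs" if "xs \<in> idx n D" for u xs
  proof -
    have "prod_apply n D gi (prod_apply n D g u) xs = prod_apply n D (pcomp D gi g) u xs"
      by (rule prod_apply_comp[OF lgi g(1) that])
    also have "\<dots> = u xs"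
      by (rule prod_apply_id[OF _ _ that]) (auto simp: lgi g(1) pcomp_nth gin lcomp_def F)
    finally show ?thesis .
  qed
  have right: "prod_apply n D g (prod_apply n D gi u) xs = u xs" if "xs \<in> idx n D" for u xs
  proof -
    have "prod_apply n D g (prod_apply n D gi u) xs = prod_apply n D (pcomp D g gi) u xs"
      by (rule prod_apply_comp[OF g(1) lgi that])
    also have "\<dots> = u xs"
      by (rule prod_apply_id[OF _ _ that]) (auto simp: lgi g(1) pcomp_nth gin lcomp_def F)
    finally show ?thesis .
  qed
  define v where "v = vnorm2 n D (prod_apply n D g psi)"
  have v0: "v > 0"
  proof (rule ccontr)
    assume "\<not> v > 0"
    hence "v = 0" using vnorm2_nonneg[of n D "prod_apply n D g psi"] unfolding v_def by linarith
    hence z: "\<forall>xs\<in>idx n D. prod_apply n D g psi xs = 0" by (simp add: v_def vnorm2_zero_iff)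
    have "\<forall>xs\<in>idx n D. psi xs = 0"
    proof
      fix xs assume xs: "xs \<in> idx n D"
      have "psi xs = prod_apply n D gi (prod_apply n D g psi) xs" using left[OF xs] by simp
      also have "\<dots> = prod_apply n D gi (\<lambda>_. 0) xs"
        by (rule arg_cong[where f="\<lambda>h. h xs"], rule prod_apply_cong) (use z in auto)
      also have "\<dots> = 0" by (simp add: prod_apply_def)
      finally show "psi xs = 0" .
    qed
    hence "vnorm2 n D psi = 0" by (simp add: vnorm2_zero_iff)
    thus False using psi1 by simp
  qed
  define \<alpha> where "\<alpha> = sqrt v"
  have \<alpha>0: "\<alpha> > 0" using v0 by (simp add: \<alpha>_def)
  have \<alpha>2: "\<alpha>^2 = v" using v0 by (simp add: \<alpha>_def)
  define ia where "ia = inverse (complex_of_real \<alpha>)"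
  have ia: "complex_of_real \<alpha> * ia = 1" using \<alpha>0 by (simp add: ia_def)
  define a where "a = normalize_state n D (prod_apply n D g psi)"
  have a_eq: "a = (\<lambda>xs. ia * prod_apply n D g psi xs)"
    unfolding a_def normalize_state_def ia_def \<alpha>_def v_def by (rule ext) (simp add: divide_inverse mult.commute)
  have psi_ne: "\<forall>xs\<in>idx n D. True" by simp
  have upper: "succ_prob n D Ks a psi \<le> qv n D g / v" if sep: "sep_op n D Ks" for Ks
  proof -
    have branch: "(if (\<exists>c. \<forall>xs\<in>idx n D. prod_apply n D ms a xs = c * psi xs)
        then vnorm2 n D (prod_apply n D ms a) else 0) * v * vnorm2 n D u
        \<le> vnorm2 n D (prod_apply n D ms (prod_apply n D g u))" if ms: "ms \<in> set Ks" for ms u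
    proof (cases "\<exists>c. \<forall>xs\<in>idx n D. prod_apply n D ms a xs = c * psi xs")
      case False show ?thesis by (simp only: if_not_P[OF False]) (simp add: vnorm2_nonneg)
    next
      case True
      note cond = True
      then obtain c where c: "\<forall>xs\<in>idx n D. prod_apply n D ms a xs = c * psi xs" by blast
      have lms: "length ms = n" using sep ms by (simp add: sep_op_def)
      define P where "P = pcomp D ms g"
      have lP: "length P = n" by (simp add: P_def lms g(1))
      define \<beta> where "\<beta> = complex_of_real \<alpha> * c"
      have Pu: "prod_apply n D P u xs = prod_apply n D ms (prod_apply n D g u) xs" if "xs \<in> idx n D" for u xs
        using prod_apply_comp[OF lms g(1) that] by (simp add: P_def)
      have Ppsi: "prod_apply n D P psi xs = \<beta> * psi xs" if xs: "xs \<in> idx n D" for xs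
      proof -
        have "prod_apply n D ms a xs = ia * prod_apply n D ms (prod_apply n D g psi) xs"
          by (simp add: a_eq prod_apply_scale)
        hence "prod_apply n D ms (prod_apply n D g psi) xs = complex_of_real \<alpha> * prod_apply n D ms a xs"
          using ia by (metis mult.assoc mult_1)
        thus ?thesis using c xs Pu[OF xs] by (simp add: \<beta>_def mult.assoc)
      qed
      have norm_a: "vnorm2 n D (prod_apply n D ms a) = (cmod c)^2"
      proof -
        have "vnorm2 n D (prod_apply n D ms a) = vnorm2 n D (\<lambda>xs. c * psi xs)"
          using c by (intro vnorm2_cong) auto
        thus ?thesis by (simp add: vnorm2_scale psi1)
      qed
      show ?thesis
      proof (cases "c = 0")
        case True thus ?thesis using norm_a by (simp only: if_P[OF cond]) (simp add: vnorm2_nonneg)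
      next
        case False
        hence \<beta>0: "\<beta> \<noteq> 0" using \<alpha>0 by (simp add: \<beta>_def)
        obtain S where lS: "length S = n" and SP: "\<And>u xs. xs \<in> idx n D \<Longrightarrow> prod_apply n D P u xs = \<beta> * prod_apply n D S u xs"
        proof (cases "n = 0")
          case True
          have "psi [] \<noteq> 0"
          proof
            assume "psi [] = 0"
            hence "vnorm2 n D psi = 0" using True by (simp add: vnorm2_def idx_0)
            thus False using psi1 by simp
          qed
          moreover have "prod_apply n D P psi [] = psi []" using True lP by (simp add: apply_nil idx_0)
          ultimately have "\<beta> = 1" using Ppsi[of "[]"] True by (simp add: idx_0)
          thus ?thesis using that[of P] lP by simp
        next
          case False
          hence "P \<noteq> []" using lP by auto
          thus ?thesis using that[of "scl (inverse \<beta>) P"] lP \<beta>0 by (simp add: prod_apply_scl)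
        qed
        have Spsi: "\<forall>xs\<in>idx n D. prod_apply n D S psi xs = psi xs"
          using Ppsi SP \<beta>0 by (metis mult_left_cancel)
        have invS: "\<forall>i<n. invertible_lop D (S!i)" by (rule stab_inv[OF LN stab lS Spsi])
        have U: "unitary_prod n D S" using stab lS invS Spsi by blast
        have "vnorm2 n D (prod_apply n D ms (prod_apply n D g u)) = vnorm2 n D (\<lambda>xs. \<beta> * prod_apply n D S u xs)"
          using Pu SP by (intro vnorm2_cong) simp
        also have "\<dots> = (cmod \<beta>)^2 * vnorm2 n D u" by (simp add: vnorm2_scale unitary_norm[OF U])
        also have "(cmod \<beta>)^2 = v * (cmod c)^2"
          using \<alpha>0 \<alpha>2 by (simp add: \<beta>_def norm_mult power_mult_distrib)
        finally show ?thesis using norm_a by (simp only: if_P[OF cond]) (simp add: mult_ac)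
      qed
    qed
    have "succ_prob n D Ks a psi * v \<in> qset n D g"
      unfolding qset_def
    proof (intro CollectI allI)
      fix u
      have "succ_prob n D Ks a psi * v * vnorm2 n D u
          = (\<Sum>ms\<leftarrow>Ks. (if (\<exists>c. \<forall>xs\<in>idx n D. prod_apply n D ms a xs = c * psi xs)
             then vnorm2 n D (prod_apply n D ms a) else 0) * v * vnorm2 n D u)"
        unfolding succ_prob_def by (simp add: sum_list_mult_const)
      also have "\<dots> \<le> (\<Sum>ms\<leftarrow>Ks. vnorm2 n D (prod_apply n D ms (prod_apply n D g u)))"
        by (rule sum_list_mono) (rule branch)
      also have "\<dots> \<le> vnorm2 n D (prod_apply n D g u)"
        using sep by (simp add: sep_op_def)
      finally show "succ_prob n D Ks a psi * v * vnorm2 n D u \<le> vnorm2 n D (prod_apply n D g u)" .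
    qed
    hence "succ_prob n D Ks a psi * v \<le> qv n D g" by (rule q_upper[OF ne])
    thus ?thesis using v0 by (simp add: field_simps)
  qed
  have le: "pmax_sep n D a psi \<le> qv n D g / v"
    unfolding pmax_sep_def using upper sep_nil by (intro cSup_least) auto
  have q0: "qv n D g \<ge> 0" by (rule q_nonneg[OF ne])
  define sq where "sq = complex_of_real (sqrt (qv n D g))"
  define M where "M = (if n = 0 then gi else scl sq gi)"
  have lM: "length M = n" by (simp add: M_def lgi)
  have MP: "prod_apply n D M w xs = sq * prod_apply n D gi w xs" if "xs \<in> idx n D" for w xs
  proof (cases "n = 0")
    case True
    hence "qv n D g = 1" using qv_0[of g D] g(1) by simp
    thus ?thesis using True by (simp add: M_def sq_def)
  next
    case False
    hence "gi \<noteq> []" using lgi by auto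
    thus ?thesis using False by (simp add: M_def prod_apply_scl)
  qed
  have sq2: "(cmod sq)^2 = qv n D g" using q0 by (simp add: sq_def)
  have sepM: "sep_op n D [M]"
    unfolding sep_op_def
  proof (intro conjI allI ballI)
    show "\<And>ms. ms \<in> set [M] \<Longrightarrow> length ms = n" using lM by simp
    fix w
    have "vnorm2 n D (prod_apply n D M w) = vnorm2 n D (\<lambda>xs. sq * prod_apply n D gi w xs)"
      using MP by (intro vnorm2_cong) simp
    also have "\<dots> = qv n D g * vnorm2 n D (prod_apply n D gi w)" by (simp add: vnorm2_scale sq2)
    also have "\<dots> \<le> vnorm2 n D (prod_apply n D g (prod_apply n D gi w))" by (rule q_mem[OF ne])
    also have "\<dots> = vnorm2 n D w" using right by (intro vnorm2_cong) simp
    finally show "(\<Sum>ms\<leftarrow>[M]. vnorm2 n D (prod_apply n D ms w)) \<le> vnorm2 n D w" by simp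
  qed
  have Ma: "prod_apply n D M a xs = (sq * ia) * psi xs" if xs: "xs \<in> idx n D" for xs
  proof -
    have "prod_apply n D M a xs = sq * (ia * prod_apply n D gi (prod_apply n D g psi) xs)"
      using MP[OF xs] by (simp add: a_eq prod_apply_scale)
    thus ?thesis using left[OF xs] by simp
  qed
  have "vnorm2 n D (prod_apply n D M a) = vnorm2 n D (\<lambda>xs. (sq * ia) * psi xs)"
    using Ma by (intro vnorm2_cong) simp
  also have "\<dots> = qv n D g / v"
    using \<alpha>0 \<alpha>2 sq2 psi1 by (simp add: vnorm2_scale norm_mult power_mult_distrib ia_def norm_inverse
        power_inverse divide_inverse)
  finally have vMa: "vnorm2 n D (prod_apply n D M a) = qv n D g / v" .
  have sM: "succ_prob n D [M] a psi = qv n D g / v"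
    unfolding succ_prob_def using Ma vMa by auto
  have mem: "qv n D g / v \<in> {succ_prob n D Ks a psi | Ks. sep_op n D Ks}"
    using sM sepM by (intro CollectI exI[of _ "[M]"]) simp
  have ge: "qv n D g / v \<le> pmax_sep n D a psi"
    unfolding pmax_sep_def by (rule cSup_upper[OF mem pmax_bdd])
  show ?thesis using le ge by (simp add: a_def v_def)
qed



lemma pmax_cong: "(\<And>xs. xs \<in> idx n D \<Longrightarrow> a xs = a' xs) \<Longrightarrow> pmax_sep n D a b = pmax_sep n D a' b"
proof -
  assume h: "\<And>xs. xs \<in> idx n D \<Longrightarrow> a xs = a' xs"
  have E: "prod_apply n D ms a = prod_apply n D ms a'" for ms by (rule prod_apply_cong) (rule h)
  have "succ_prob n D Ks a b = succ_prob n D Ks a' b" for Ks unfolding succ_prob_def E ..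
  thus ?thesis by (simp add: pmax_sep_def)
qed

lemma prod_entry_Id: "xs \<in> idx n D \<Longrightarrow> ys \<in> idx n D \<Longrightarrow> prod_entry (replicate n Id_lop) xs ys = (if xs = ys then 1 else 0)"
proof -
  assume xs: "xs \<in> idx n D" and ys: "ys \<in> idx n D"
  have "prod_entry (replicate n Id_lop) xs ys = (\<Prod>i<n. if xs!i = ys!i then 1 else 0)"
    unfolding prod_entry_def by (intro prod.cong) (auto simp: Id_lop_def)
  also have "\<dots> = (if xs = ys then 1 else 0)"
  proof (cases "xs = ys")
    case False
    have "\<not> (\<forall>i<n. xs!i = ys!i)"
      using False nth_equalityI[of xs ys] idx_len[OF xs] idx_len[OF ys] by auto
    then obtain i where "i < n" "xs!i \<noteq> ys!i" by auto
    hence "(\<Prod>i<n. if xs!i = ys!i then 1 else (0::complex)) = 0"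
      by (intro prod_zero) auto
    thus ?thesis using False by simp
  qed simp
  finally show ?thesis .
qed

lemma apply_Id: "xs \<in> idx n D \<Longrightarrow> prod_apply n D (replicate n Id_lop) v xs = v xs"
  by (rule prod_apply_id) (auto simp: Id_lop_def)

lemma invertible_Id: "invertible_lop D Id_lop"
  unfolding invertible_lop_def by (rule exI[of _ Id_lop]) (simp add: Id_lop_def)

lemma rep0_idx: "xs \<in> idx n d \<Longrightarrow> replicate n 0 \<in> idx n d"
  by (auto simp: idx_iff)

lemma single_stab:
  assumes stab2: "\<forall>S. length S = n \<longrightarrow> (\<forall>i<n. invertible_lop (d*d) (S!i)) \<longrightarrow>
           (\<forall>xs\<in>idx n (d*d). prod_apply n (d*d) S (tensor2 d psi psi) xs = tensor2 d psi psi xs) \<longrightarrow>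
           unitary_prod n (d*d) S"
  shows "\<forall>S. length S = n \<longrightarrow> (\<forall>i<n. invertible_lop d (S!i)) \<longrightarrow>
           (\<forall>xs\<in>idx n d. prod_apply n d S psi xs = psi xs) \<longrightarrow> unitary_prod n d S"
proof (intro allI impI)
  fix S assume lS: "length S = n" and inv: "\<forall>i<n. invertible_lop d (S!i)"
    and st: "\<forall>xs\<in>idx n d. prod_apply n d S psi xs = psi xs"
  define S2 where "S2 = pairops d S (replicate n Id_lop)"
  have lS2: "length S2 = n" by (simp add: S2_def lS)
  have inv2: "\<forall>i<n. invertible_lop (d*d) (S2!i)"
    using inv lS by (auto simp: S2_def pairops_def invertible_pairop invertible_Id)
  have st2: "\<forall>zs\<in>idx n (d*d). prod_apply n (d*d) S2 (tensor2 d psi psi) zs = tensor2 d psi psi zs"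
  proof
    fix zs assume zs: "zs \<in> idx n (d*d)"
    have "prod_apply n (d*d) S2 (tensor2 d psi psi) zs
        = tensor2 d (prod_apply n d S psi) (prod_apply n d (replicate n Id_lop) psi) zs"
      unfolding S2_def by (rule apply_pair_tensor[OF lS _ zs]) simp
    also have "\<dots> = tensor2 d psi psi zs"
      using st apply_Id div_idx[OF zs] mod_idx[OF zs] by (simp add: tensor2_def)
    finally show "prod_apply n (d*d) S2 (tensor2 d psi psi) zs = tensor2 d psi psi zs" .
  qed
  have U2: "unitary_prod n (d*d) S2" using stab2 lS2 inv2 st2 by blast
  show "unitary_prod n d S"
    unfolding unitary_prod_def
  proof (intro ballI)
    fix xs ys assume xs: "xs \<in> idx n d" and ys: "ys \<in> idx n d"
    define z0 where "z0 = replicate n (0::nat)"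
    have z0: "z0 \<in> idx n d" using rep0_idx[OF xs] by (simp add: z0_def)
    have "(\<Sum>ws\<in>idx n (d*d). cnj (prod_entry S2 ws (enc d xs z0)) * prod_entry S2 ws (enc d ys z0))
        = (if enc d xs z0 = enc d ys z0 then 1 else 0)"
      using U2 enc_idx[OF xs z0] enc_idx[OF ys z0] unfolding unitary_prod_def by blast
    also have "\<dots> = (if xs = ys then 1 else 0)" using enc_inj[OF xs z0 ys z0] by auto
    also have "(\<Sum>ws\<in>idx n (d*d). cnj (prod_entry S2 ws (enc d xs z0)) * prod_entry S2 ws (enc d ys z0))
        = (\<Sum>xs'\<in>idx n d. \<Sum>ys'\<in>idx n d. cnj (prod_entry S xs' xs) * prod_entry S xs' ys
             * (if ys' = z0 then 1 else 0))"
      unfolding sum_pair S2_def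
      by (intro sum.cong refl) (simp add: prod_entry_pair lS xs ys z0 prod_entry_Id)
    also have "\<dots> = (\<Sum>xs'\<in>idx n d. cnj (prod_entry S xs' xs) * prod_entry S xs' ys)"
      using z0 by (intro sum.cong refl) (simp add: sum.delta')
    finally show "(\<Sum>zs\<in>idx n d. cnj (prod_entry S zs xs) * prod_entry S zs ys) = (if xs = ys then 1 else 0)" .
  qed
qed



lemma q_ge:
  assumes ne: "idx n d \<noteq> {}" and l: "length g1 = n" "length g2 = n"
  shows "qv n d g1 * qv n d g2 * vnorm2 n (d*d) u \<le> vnorm2 n (d*d) (prod_apply n (d*d) (pairops d g1 g2) u)"
proof -
  let ?q1 = "qv n d g1" and ?q2 = "qv n d g2"
  have q1: "?q1 \<ge> 0" by (rule q_nonneg[OF ne])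
  define W where "W = (\<lambda>xs' ys. prod_apply n d g2 (\<lambda>ys'. u (enc d xs' ys')) ys)"
  have Gu: "prod_apply n (d*d) (pairops d g1 g2) u (enc d xs ys) = prod_apply n d g1 (\<lambda>xs'. W xs' ys) xs"
    if "xs \<in> idx n d" "ys \<in> idx n d" for xs ys
    by (subst apply_pair[OF l that]) (simp add: W_def prod_apply_def)
  have "vnorm2 n (d*d) (prod_apply n (d*d) (pairops d g1 g2) u)
      = (\<Sum>xs\<in>idx n d. \<Sum>ys\<in>idx n d. (cmod (prod_apply n d g1 (\<lambda>xs'. W xs' ys) xs))^2)"
    unfolding vnorm2_def sum_pair by (intro sum.cong refl) (simp add: Gu)
  also have "\<dots> = (\<Sum>ys\<in>idx n d. vnorm2 n d (prod_apply n d g1 (\<lambda>xs'. W xs' ys)))"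
    unfolding vnorm2_def by (rule sum.swap)
  also have "\<dots> \<ge> (\<Sum>ys\<in>idx n d. ?q1 * vnorm2 n d (\<lambda>xs'. W xs' ys))"
    by (intro sum_mono q_mem[OF ne])
  finally have A: "(\<Sum>ys\<in>idx n d. ?q1 * vnorm2 n d (\<lambda>xs'. W xs' ys))
      \<le> vnorm2 n (d*d) (prod_apply n (d*d) (pairops d g1 g2) u)" .
  have "(\<Sum>ys\<in>idx n d. ?q1 * vnorm2 n d (\<lambda>xs'. W xs' ys))
      = ?q1 * (\<Sum>xs\<in>idx n d. vnorm2 n d (prod_apply n d g2 (\<lambda>ys'. u (enc d xs ys'))))"
    unfolding vnorm2_def W_def sum_distrib_left[symmetric] by (subst sum.swap) simp
  also have "\<dots> \<ge> ?q1 * (\<Sum>xs\<in>idx n d. ?q2 * vnorm2 n d (\<lambda>ys'. u (enc d xs ys')))"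
    using q1 by (intro mult_left_mono sum_mono q_mem[OF ne]) auto
  finally have B: "?q1 * (\<Sum>xs\<in>idx n d. ?q2 * vnorm2 n d (\<lambda>ys'. u (enc d xs ys')))
      \<le> vnorm2 n (d*d) (prod_apply n (d*d) (pairops d g1 g2) u)" using A by linarith
  have "?q1 * (\<Sum>xs\<in>idx n d. ?q2 * vnorm2 n d (\<lambda>ys'. u (enc d xs ys'))) = ?q1 * ?q2 * vnorm2 n (d*d) u"
    unfolding vnorm2_def sum_pair by (simp add: sum_distrib_left mult.assoc)
  thus ?thesis using B by linarith
qed

lemma q_mult:
  assumes ne: "idx n d \<noteq> {}" and l: "length g1 = n" "length g2 = n"
  shows "qv n (d*d) (pairops d g1 g2) = qv n d g1 * qv n d g2"
proof -
  let ?q1 = "qv n d g1" and ?q2 = "qv n d g2" and ?G = "pairops d g1 g2"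
  have q1: "?q1 \<ge> 0" and q2: "?q2 \<ge> 0" by (rule q_nonneg[OF ne])+
  obtain x where x: "x \<in> idx n d" using ne by blast
  have ne2: "idx n (d*d) \<noteq> {}" using enc_idx[OF x x] by blast
  have "?q1 * ?q2 \<in> qset n (d*d) ?G" unfolding qset_def using q_ge[OF ne l] by blast
  hence ge: "?q1 * ?q2 \<le> qv n (d*d) ?G" by (rule q_upper[OF ne2])
  have le: "qv n (d*d) ?G \<le> ?q1 * ?q2"
    unfolding qv_def[of n "d*d" ?G]
  proof (rule cSup_least)
    show "qset n (d*d) ?G \<noteq> {}" using qset_0 by blast
    fix t assume t: "t \<in> qset n (d*d) ?G"
    have "t \<le> ?q1 * ?q2 + e" if e: "0 < e" for e :: real
    proof -
      define \<epsilon> where "\<epsilon> = min 1 (e / (?q1 + ?q2 + 1))"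
      have \<epsilon>0: "\<epsilon> > 0" using e q1 q2 by (simp add: \<epsilon>_def)
      have \<epsilon>1: "\<epsilon> \<le> 1" by (simp add: \<epsilon>_def)
      have \<epsilon>e: "\<epsilon> * (?q1 + ?q2 + 1) \<le> e"
      proof -
        have "\<epsilon> \<le> e / (?q1 + ?q2 + 1)" by (simp add: \<epsilon>_def)
        thus ?thesis using q1 q2 by (simp add: field_simps)
      qed
      obtain u1 where u1: "vnorm2 n d u1 > 0" "vnorm2 n d (prod_apply n d g1 u1) \<le> (?q1 + \<epsilon>) * vnorm2 n d u1"
        using q_approx[OF ne \<epsilon>0] by blast
      obtain u2 where u2: "vnorm2 n d u2 > 0" "vnorm2 n d (prod_apply n d g2 u2) \<le> (?q2 + \<epsilon>) * vnorm2 n d u2"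
        using q_approx[OF ne \<epsilon>0] by blast
      have "t * vnorm2 n (d*d) (tensor2 d u1 u2) \<le> vnorm2 n (d*d) (prod_apply n (d*d) ?G (tensor2 d u1 u2))"
        using t by (simp add: qset_def)
      also have "vnorm2 n (d*d) (prod_apply n (d*d) ?G (tensor2 d u1 u2))
          = vnorm2 n (d*d) (tensor2 d (prod_apply n d g1 u1) (prod_apply n d g2 u2))"
        by (intro vnorm2_cong apply_pair_tensor[OF l])
      finally have "t * (vnorm2 n d u1 * vnorm2 n d u2)
          \<le> vnorm2 n d (prod_apply n d g1 u1) * vnorm2 n d (prod_apply n d g2 u2)"
        by (simp add: vnorm2_tensor)
      also have "\<dots> \<le> ((?q1 + \<epsilon>) * vnorm2 n d u1) * ((?q2 + \<epsilon>) * vnorm2 n d u2)"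
        by (intro mult_mono u1(2) u2(2) vnorm2_nonneg) (use q1 \<epsilon>0 u1 in auto)
      also have "\<dots> = ((?q1 + \<epsilon>) * (?q2 + \<epsilon>)) * (vnorm2 n d u1 * vnorm2 n d u2)"
        by (simp add: mult_ac)
      finally have T1: "t \<le> (?q1 + \<epsilon>) * (?q2 + \<epsilon>)"
        using u1(1) u2(1) by (simp add: mult_le_cancel_right)
      have T2: "(?q1 + \<epsilon>) * (?q2 + \<epsilon>) = ?q1 * ?q2 + \<epsilon> * (?q1 + ?q2 + \<epsilon>)" by (simp add: algebra_simps)
      have T3: "\<epsilon> * (?q1 + ?q2 + \<epsilon>) \<le> \<epsilon> * (?q1 + ?q2 + 1)"
        using \<epsilon>0 \<epsilon>1 by (intro mult_left_mono) auto
      show "t \<le> ?q1 * ?q2 + e" using T1 T2 T3 \<epsilon>e by linarith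
    qed
    thus "t \<le> ?q1 * ?q2" by (rule field_le_epsilon)
  qed
  show ?thesis using ge le by linarith
qed



lemma main_aux:
  fixes n d :: nat and psi :: state and g1 g2 :: "lop list"
  assumes LN: "\<And>D A. \<not> invertible_lop D A \<Longrightarrow> \<exists>w a0. a0 < D \<and> w a0 \<noteq> 0 \<and> (\<forall>l<D. (\<Sum>k<D. w k * A k l) = 0)"
  assumes "vnorm2 n d psi = 1"
    and "\<forall>S. length S = n \<longrightarrow> (\<forall>i<n. invertible_lop (d*d) (S!i)) \<longrightarrow>
           (\<forall>xs\<in>idx n (d*d). prod_apply n (d*d) S (tensor2 d psi psi) xs = tensor2 d psi psi xs) \<longrightarrow>
           unitary_prod n (d*d) S"
    and "length g1 = n" and "\<forall>i<n. invertible_lop d (g1!i)"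
    and "length g2 = n" and "\<forall>i<n. invertible_lop d (g2!i)"
  shows "pmax_sep n (d*d)
           (tensor2 d (normalize_state n d (prod_apply n d g1 psi))
                      (normalize_state n d (prod_apply n d g2 psi)))
           (tensor2 d psi psi)
       = pmax_sep n d (normalize_state n d (prod_apply n d g1 psi)) psi
         * pmax_sep n d (normalize_state n d (prod_apply n d g2 psi)) psi"
proof -
  note psi1 = assms(2) and stab2 = assms(3)
  define G where "G = pairops d g1 g2"
  define Psi where "Psi = tensor2 d psi psi"
  define v1 where "v1 = vnorm2 n d (prod_apply n d g1 psi)"
  define v2 where "v2 = vnorm2 n d (prod_apply n d g2 psi)"
  have ne: "idx n d \<noteq> {}" using psi1 by (auto simp: vnorm2_def)
  have Psi1: "vnorm2 n (d*d) Psi = 1" using psi1 by (simp add: Psi_def vnorm2_tensor)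
  note stab1 = single_stab[OF stab2]
  have lG: "length G = n" using assms(4,6) by (simp add: G_def)
  have invG: "\<forall>i<n. invertible_lop (d*d) (G!i)"
    using assms(4-7) by (auto simp: G_def pairops_def invertible_pairop)
  have A1: "pmax_sep n d (normalize_state n d (prod_apply n d g1 psi)) psi = qv n d g1 / v1"
    unfolding v1_def by (rule lemA[OF LN psi1 stab1 assms(4,5)])
  have A2: "pmax_sep n d (normalize_state n d (prod_apply n d g2 psi)) psi = qv n d g2 / v2"
    unfolding v2_def by (rule lemA[OF LN psi1 stab1 assms(6,7)])
  have AG: "pmax_sep n (d*d) (normalize_state n (d*d) (prod_apply n (d*d) G Psi)) Psi
      = qv n (d*d) G / vnorm2 n (d*d) (prod_apply n (d*d) G Psi)"
    by (rule lemA[OF LN Psi1 _ lG invG]) (use stab2 in \<open>unfold Psi_def\<close>)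
  have GPsi: "prod_apply n (d*d) G Psi zs = tensor2 d (prod_apply n d g1 psi) (prod_apply n d g2 psi) zs"
    if "zs \<in> idx n (d*d)" for zs
    unfolding G_def Psi_def by (rule apply_pair_tensor[OF assms(4,6) that])
  have vG: "vnorm2 n (d*d) (prod_apply n (d*d) G Psi) = v1 * v2"
    using GPsi by (simp add: vnorm2_cong[of n "d*d" _ "tensor2 d _ _"] vnorm2_tensor v1_def v2_def)
  have qG: "qv n (d*d) G = qv n d g1 * qv n d g2"
    unfolding G_def by (rule q_mult[OF ne assms(4,6)])
  have cong: "tensor2 d (normalize_state n d (prod_apply n d g1 psi)) (normalize_state n d (prod_apply n d g2 psi)) zs
      = normalize_state n (d*d) (prod_apply n (d*d) G Psi) zs" if zs: "zs \<in> idx n (d*d)" for zs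
    by (simp add: GPsi[OF zs] vG normalize_state_def tensor2_def real_sqrt_mult v1_def v2_def)
  have "pmax_sep n (d*d) (tensor2 d (normalize_state n d (prod_apply n d g1 psi))
                      (normalize_state n d (prod_apply n d g2 psi))) Psi
      = pmax_sep n (d*d) (normalize_state n (d*d) (prod_apply n (d*d) G Psi)) Psi"
    by (rule pmax_cong) (rule cong)
  also have "\<dots> = (qv n d g1 * qv n d g2) / (v1 * v2)" using AG vG qG by simp
  also have "\<dots> = (qv n d g1 / v1) * (qv n d g2 / v2)" by simp
  finally show ?thesis using A1 A2 by (simp add: Psi_def)
qed


theorem mainTheorem7:
  fixes n d :: nat and psi :: state and g1 g2 :: "lop list"
  assumes "vnorm2 n d psi = 1"
    and "\<forall>S. length S = n \<longrightarrow> (\<forall>i<n. invertible_lop (d*d) (S!i)) \<longrightarrow>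
           (\<forall>xs\<in>idx n (d*d). prod_apply n (d*d) S (tensor2 d psi psi) xs = tensor2 d psi psi xs) \<longrightarrow>
           unitary_prod n (d*d) S"
    and "length g1 = n" and "\<forall>i<n. invertible_lop d (g1!i)"
    and "length g2 = n" and "\<forall>i<n. invertible_lop d (g2!i)"
  shows "pmax_sep n (d*d)
           (tensor2 d (normalize_state n d (prod_apply n d g1 psi))
                      (normalize_state n d (prod_apply n d g2 psi)))
           (tensor2 d psi psi)
       = pmax_sep n d (normalize_state n d (prod_apply n d g1 psi)) psi
         * pmax_sep n d (normalize_state n d (prod_apply n d g2 psi)) psi"
    by (rule main_aux[OF noninv_left_null assms])

end
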